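(* Let $A,B$ be nonzero finite-dimensional $K$-subspaces of $L$. Then there exist a $K$-subspace $S$ of $\langle AB\rangle$ and a (possibly skew) subfield $H$ of $L$ with $K\subset H\subset L$ and $\dim_KH$ finite, such that $$\dim_KS\geq\dim_KA+\dim_KB-\dim_KH,$$ and either $HS=S$ or $SH=S$.
   Context: $K$ is a commutative field and $L$ is a (possibly noncommutative) division ring containing $K$ in its center. For $S\subset L$, $\langle S\rangle$ denotes the $K$-subspace of $L$ spanned by $S$. For subsets $S_1,S_2$ of $L$, $S_1S_2=\{s_1s_2\mid s_1\in S_1,s_2\in S_2\}$ (product set). *)

theory Defs
  imports Complex_Main
begin

text \<open>The field K is a type 'k, embedded into the division ring L (type 'l) by a
  ring homomorphism emb whose image is central in L.  L is a K-vector space via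
  left multiplication by emb k (equal to right multiplication since emb k is central).\<close>

definition central_field_emb :: "('k::field \<Rightarrow> 'l::division_ring) \<Rightarrow> bool" where
  "central_field_emb emb \<longleftrightarrow>
     emb 1 = 1 \<and> (\<forall>a b. emb (a + b) = emb a + emb b) \<and> (\<forall>a b. emb (a * b) = emb a * emb b)
     \<and> (\<forall>a x. emb a * x = x * emb a)"

definition kscale :: "('k::field \<Rightarrow> 'l::division_ring) \<Rightarrow> 'k \<Rightarrow> 'l \<Rightarrow> 'l" where
  "kscale emb k x = emb k * x"

definition setmult :: "'l::times set \<Rightarrow> 'l set \<Rightarrow> 'l set" where
  "setmult S1 S2 = {s1 * s2 | s1 s2. s1 \<in> S1 \<and> s2 \<in> S2}"

definition kfindim :: "('k::field \<Rightarrow> 'l::division_ring) \<Rightarrow> 'l set \<Rightarrow> bool" where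
  "kfindim emb V \<longleftrightarrow> module.subspace (kscale emb) V \<and>
     (\<exists>F. finite F \<and> module.span (kscale emb) F = V)"

definition sub_division_ring_over :: "('k::field \<Rightarrow> 'l::division_ring) \<Rightarrow> 'l set \<Rightarrow> bool" where
  "sub_division_ring_over emb H \<longleftrightarrow>
     range emb \<subseteq> H \<and> 0 \<in> H \<and> 1 \<in> H \<and>
     (\<forall>x\<in>H. \<forall>y\<in>H. x + y \<in> H \<and> x * y \<in> H) \<and>
     (\<forall>x\<in>H. - x \<in> H) \<and> (\<forall>x\<in>H. x \<noteq> 0 \<longrightarrow> inverse x \<in> H)"

end

theory Submission
  imports Defs
begin

locale kd =
  fixes emb :: "'k::field \<Rightarrow> 'l::division_ring"
  assumes cfe: "central_field_emb emb"
begin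

lemma emb_1: "emb 1 = 1" and emb_add: "emb (a + b) = emb a + emb b"
  and emb_mult: "emb (a * b) = emb a * emb b" and emb_comm: "emb a * x = x * emb a"
  using cfe unfolding central_field_emb_def by blast+

lemma vs: "vector_space (kscale emb)"
  unfolding vector_space_def kscale_def
  by (auto simp: distrib_left distrib_right emb_add emb_mult emb_1 mult.assoc)

sublocale V: vector_space "kscale emb" by (rule vs)

definition fd :: "'l set \<Rightarrow> bool" where
  "fd V \<longleftrightarrow> (\<exists>F. finite F \<and> V \<subseteq> V.span F)"

lemma fd_subset: "fd W \<Longrightarrow> V \<subseteq> W \<Longrightarrow> fd V"
  unfolding fd_def by blast

lemma fd_span_subset: "fd W \<Longrightarrow> V \<subseteq> V.span W \<Longrightarrow> fd V"
  unfolding fd_def by (meson V.span_minimal V.subspace_span order_trans)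

lemma fd_basis:
  assumes "fd V"
  obtains B where "finite B" "B \<subseteq> V" "V.independent B" "V \<subseteq> V.span B" "card B = V.dim V"
proof -
  obtain B where B: "B \<subseteq> V" "V.independent B" "V \<subseteq> V.span B" "card B = V.dim V"
    using V.basis_exists by blast
  obtain F where F: "finite F" "V \<subseteq> V.span F" using assms unfolding fd_def by blast
  have "B \<subseteq> V.span F" using B(1) F(2) by (rule order_trans)
  then have "finite B" using V.independent_span_bound[OF F(1) B(2)] by simp
  with B show ?thesis by (intro that)
qed

lemma dim_mono':
  assumes "fd W" "V \<subseteq> V.span W"
  shows "V.dim V \<le> V.dim W"
proof -
  obtain B where B: "finite B" "B \<subseteq> W" "V.independent B" "W \<subseteq> V.span B" "card B = V.dim W"
    using fd_basis[OF assms(1)] by blast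
  have "V \<subseteq> V.span B"
    using assms(2) B(4) by (meson V.span_minimal V.subspace_span order_trans)
  then show ?thesis using V.dim_le_card[OF _ B(1)] B(5) by simp
qed

lemma dim_subset': "fd W \<Longrightarrow> V \<subseteq> W \<Longrightarrow> V.dim V \<le> V.dim W"
  using dim_mono'[of W V] V.span_superset by blast

lemma subspace_dim_equal':
  assumes "V.subspace S" "V.subspace T" "S \<subseteq> T" "fd T" "V.dim T \<le> V.dim S"
  shows "S = T"
proof -
  obtain B where B: "B \<subseteq> S" "V.independent B" "S \<subseteq> V.span B" "card B = V.dim S"
    using V.basis_exists by blast
  obtain B' where B': "B \<subseteq> B'" "B' \<subseteq> T" "V.independent B'" "T \<subseteq> V.span B'"
    using V.maximal_independent_subset_extend[of B T] B assms(3) by blast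
  obtain F where F: "finite F" "T \<subseteq> V.span F" using assms(4) unfolding fd_def by blast
  have "B' \<subseteq> V.span F" using B'(2) F(2) by (rule order_trans)
  then have fin: "finite B'" using V.independent_span_bound[OF F(1) B'(3)] by simp
  have "card B' = V.dim T" using V.basis_card_eq_dim B' by blast
  then have "card B' \<le> card B" using assms(5) B(4) by simp
  then have "B = B'" using card_seteq[OF fin B'(1)] by simp
  then have "T \<subseteq> V.span B" using B' by simp
  also have "\<dots> \<subseteq> S" using V.span_minimal[OF B(1) assms(1)] .
  finally show ?thesis using assms(3) by blast
qed

lemma dim_zero_iff:
  assumes "fd X"
  shows "V.dim X = 0 \<longleftrightarrow> X \<subseteq> {0}"
proof
  assume "V.dim X = 0"
  then obtain B where "finite B" "X \<subseteq> V.span B" "card B = 0"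
    using fd_basis[OF assms] by metis
  then show "X \<subseteq> {0}" by simp
next
  assume "X \<subseteq> {0}"
  then have "X \<subseteq> V.span {}" by simp
  then show "V.dim X = 0" using V.dim_le_card[of X "{}"] by simp
qed


lemma indep_explicit_fin:
  assumes "finite B"
  shows "V.independent B \<longleftrightarrow> (\<forall>c. (\<Sum>v\<in>B. kscale emb (c v) v) = 0 \<longrightarrow> (\<forall>v \<in> B. c v = 0))"
  using V.dependent_finite[OF assms] by auto

lemma dim_sums_Int':
  assumes "V.subspace S" "V.subspace T" "fd S" "fd T"
  shows "V.dim {x + y |x y. x \<in> S \<and> y \<in> T} + V.dim(S \<inter> T) = V.dim S + V.dim T" (is "V.dim ?ST + _ = _")
proof -
  obtain B where B: "B \<subseteq> S \<inter> T" "S \<inter> T \<subseteq> V.span B"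
             and indB: "V.independent B"
             and cardB: "card B = V.dim (S \<inter> T)"
    using V.basis_exists by metis
  then obtain C D where "B \<subseteq> C" "C \<subseteq> S" "V.independent C" "S \<subseteq> V.span C"
                    and "B \<subseteq> D" "D \<subseteq> T" "V.independent D" "T \<subseteq> V.span D"
    using V.maximal_independent_subset_extend
    by (metis Int_subset_iff \<open>B \<subseteq> S \<inter> T\<close> indB)
  obtain F1 where F1: "finite F1" "S \<subseteq> V.span F1" using assms(3) unfolding fd_def by blast
  obtain F2 where F2: "finite F2" "T \<subseteq> V.span F2" using assms(4) unfolding fd_def by blast
  have "C \<subseteq> V.span F1" using \<open>C \<subseteq> S\<close> F1(2) by (rule order_trans)
  then have "finite C" using V.independent_span_bound[OF F1(1) \<open>V.independent C\<close>] by simp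
  have "D \<subseteq> V.span F2" using \<open>D \<subseteq> T\<close> F2(2) by (rule order_trans)
  then have "finite D" using V.independent_span_bound[OF F2(1) \<open>V.independent D\<close>] by simp
  have "finite B" using \<open>finite C\<close> \<open>B \<subseteq> C\<close> finite_subset by blast
  have Beq: "B = C \<inter> D"
  proof (rule V.spanning_subset_independent [symmetric])
    show "V.independent (C \<inter> D)"
      by (meson \<open>V.independent C\<close> V.independent_mono inf.cobounded1)
  qed (use B \<open>C \<subseteq> S\<close> \<open>D \<subseteq> T\<close> \<open>B \<subseteq> C\<close> \<open>B \<subseteq> D\<close> in auto)
  then have Deq: "D = B \<union> (D - C)"
    by blast
  have CUD: "C \<union> D \<subseteq> ?ST"
  proof (simp, intro conjI)
    show "C \<subseteq> ?ST"
      using V.span_zero V.span_minimal [OF _ \<open>V.subspace T\<close>] \<open>C \<subseteq> S\<close> by force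
    show "D \<subseteq> ?ST"
      using V.span_zero V.span_minimal [OF _ \<open>V.subspace S\<close>] \<open>D \<subseteq> T\<close> by force
  qed
  have "a v = 0" if 0: "(\<Sum>v\<in>C. kscale emb (a v) v) + (\<Sum>v\<in>D - C. kscale emb (a v) v) = 0"
                 and v: "v \<in> C \<union> (D-C)" for a v
  proof -
    have CsS: "\<And>x. x \<in> C \<Longrightarrow> kscale emb (a x) x \<in> S"
      using \<open>C \<subseteq> S\<close> \<open>V.subspace S\<close> V.subspace_scale by auto
    have eq: "(\<Sum>v\<in>D - C. kscale emb (a v) v) = - (\<Sum>v\<in>C. kscale emb (a v) v)"
      using that add_eq_0_iff by blast
    have "(\<Sum>v\<in>D - C. kscale emb (a v) v) \<in> S"
      by (simp add: eq CsS \<open>V.subspace S\<close> V.subspace_neg V.subspace_sum)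
    moreover have "(\<Sum>v\<in>D - C. kscale emb (a v) v) \<in> T"
      apply (rule V.subspace_sum [OF \<open>V.subspace T\<close>])
      by (meson DiffD1 \<open>D \<subseteq> T\<close> \<open>V.subspace T\<close> subset_eq V.subspace_def)
    ultimately have "(\<Sum>v \<in> D-C. kscale emb (a v) v) \<in> V.span B"
      using B by blast
    then obtain e where e: "(\<Sum>v\<in>B. kscale emb (e v) v) = (\<Sum>v \<in> D-C. kscale emb (a v) v)"
      using V.span_finite [OF \<open>finite B\<close>] by force
    define cc where "cc x = (if x \<in> B then a x + e x else a x)" for x
    have [simp]: "C \<inter> B = B" "D \<inter> B = B" "C \<inter> - B = C-D" "B \<inter> (D - C) = {}"
      using \<open>B \<subseteq> C\<close> \<open>B \<subseteq> D\<close> Beq by blast+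
    have f2: "(\<Sum>v\<in>C \<inter> D. kscale emb (e v) v) = (\<Sum>v\<in>D - C. kscale emb (a v) v)"
      using Beq e by presburger
    have f3: "(\<Sum>v\<in>C \<union> D. kscale emb (a v) v) = (\<Sum>v\<in>C - D. kscale emb (a v) v) + (\<Sum>v\<in>D - C. kscale emb (a v) v) + (\<Sum>v\<in>C \<inter> D. kscale emb (a v) v)"
      using \<open>finite C\<close> \<open>finite D\<close> sum.union_diff2 by blast
    have f4: "(\<Sum>v\<in>C \<union> (D - C). kscale emb (a v) v) = (\<Sum>v\<in>C. kscale emb (a v) v) + (\<Sum>v\<in>D - C. kscale emb (a v) v)"
      by (meson Diff_disjoint \<open>finite C\<close> \<open>finite D\<close> finite_Diff sum.union_disjoint)
    have "(\<Sum>v\<in>C. kscale emb (cc v) v) = 0"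
      using 0 f2 f3 f4
      apply (simp add: cc_def Beq \<open>finite C\<close> sum.If_cases V.scale_left_distrib sum.distrib
          if_distrib if_distribR)
      apply (simp add: add.commute add.left_commute diff_eq)
      done
    then have "\<And>v. v \<in> C \<Longrightarrow> cc v = 0"
      using indep_explicit_fin \<open>V.independent C\<close> \<open>finite C\<close> by blast
    then have C0: "\<And>v. v \<in> C - B \<Longrightarrow> a v = 0"
      by (simp add: cc_def Beq) meson
    then have [simp]: "(\<Sum>x\<in>C - B. kscale emb (a x) x) = 0"
      by simp
    have "(\<Sum>x\<in>C. kscale emb (a x) x) = (\<Sum>x\<in>B. kscale emb (a x) x)"
    proof -
      have "C - D = C - B"
        using Beq by blast
      then show ?thesis
        using Beq \<open>(\<Sum>x\<in>C - B. kscale emb (a x) x) = 0\<close> f3 f4 by auto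
    qed
    with 0 have Dcc0: "(\<Sum>v\<in>D. kscale emb (a v) v) = 0"
      by (subst Deq) (simp add: \<open>finite B\<close> \<open>finite D\<close> sum_Un)
    then have D0: "\<And>v. v \<in> D \<Longrightarrow> a v = 0"
      using indep_explicit_fin \<open>V.independent D\<close> \<open>finite D\<close> by blast
    show ?thesis
      using v C0 D0 Beq by blast
  qed
  then have "V.independent (C \<union> (D - C))"
    by (simp add: indep_explicit_fin \<open>finite C\<close> \<open>finite D\<close> sum_Un del: Un_Diff_cancel)
  then have indCUD: "V.independent (C \<union> D)" by simp
  have "V.dim (S \<inter> T) = card B"
    by (rule V.dim_unique [OF B indB refl])
  moreover have "V.dim S = card C"
    by (metis \<open>C \<subseteq> S\<close> \<open>V.independent C\<close> \<open>S \<subseteq> V.span C\<close> V.basis_card_eq_dim)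
  moreover have "V.dim T = card D"
    by (metis \<open>D \<subseteq> T\<close> \<open>V.independent D\<close> \<open>T \<subseteq> V.span D\<close> V.basis_card_eq_dim)
  moreover have "V.dim ?ST = card(C \<union> D)"
  proof -
    have *: "\<And>x y. \<lbrakk>x \<in> S; y \<in> T\<rbrakk> \<Longrightarrow> x + y \<in> V.span (C \<union> D)"
      by (meson \<open>S \<subseteq> V.span C\<close> \<open>T \<subseteq> V.span D\<close> V.span_add V.span_mono subsetCE sup.cobounded1 sup.cobounded2)
    show ?thesis
      by (auto intro: * V.dim_unique [OF CUD _ indCUD refl])
  qed
  ultimately show ?thesis
    using \<open>B = C \<inter> D\<close> [symmetric]
    by (simp add: \<open>finite C\<close> \<open>finite D\<close> card_Un_Int)
qed


lemma hom_l: "module_hom (kscale emb) (kscale emb) (\<lambda>x. u * x)"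
  by (rule module_hom.intro[OF V.module_axioms V.module_axioms], rule module_hom_axioms.intro)
     (simp_all add: kscale_def distrib_left, metis emb_comm mult.assoc)

lemma hom_r: "module_hom (kscale emb) (kscale emb) (\<lambda>x. x * v)"
  by (rule module_hom.intro[OF V.module_axioms V.module_axioms], rule module_hom_axioms.intro)
     (auto simp: kscale_def distrib_right mult.assoc)

lemma dim_image_inj:
  assumes h: "module_hom (kscale emb) (kscale emb) f" and i: "inj f"
  shows "V.dim (f ` X) = V.dim X"
proof -
  obtain B where B: "B \<subseteq> X" "V.independent B" "X \<subseteq> V.span B" "card B = V.dim X"
    using V.basis_exists by blast
  have "V.independent (f ` B)"
    using module_hom.independent_injective_image[OF h B(2)] i by (simp add: inj_on_def inj_def)
  moreover have "f ` X \<subseteq> V.span (f ` B)" using module_hom.spans_image[OF h B(3)] .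
  moreover have "f ` B \<subseteq> f ` X" using B(1) by blast
  ultimately have "card (f ` B) = V.dim (f ` X)" using V.basis_card_eq_dim by blast
  moreover have "card (f ` B) = card B" using card_image i by (metis inj_on_subset subset_UNIV)
  ultimately show ?thesis using B(4) by simp
qed

lemma fd_image:
  assumes h: "module_hom (kscale emb) (kscale emb) f" and "fd X"
  shows "fd (f ` X)"
proof -
  obtain F where F: "finite F" "X \<subseteq> V.span F" using assms(2) unfolding fd_def by blast
  have "f ` X \<subseteq> V.span (f ` F)" using module_hom.spans_image[OF h F(2)] .
  then show ?thesis unfolding fd_def using F(1) by blast
qed

lemma subspace_image:
  assumes h: "module_hom (kscale emb) (kscale emb) f" and "V.subspace X"
  shows "V.subspace (f ` X)"
  using module_hom.subspace_image[OF h assms(2)] .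

lemma inj_l: fixes u :: 'l assumes "u \<noteq> 0" shows "inj (\<lambda>x. u * x)"
proof (rule injI)
  fix x y assume "u * x = u * y"
  then have "inverse u * (u * x) = inverse u * (u * y)" by simp
  then show "x = y" using assms by (simp add: mult.assoc[symmetric])
qed

lemma inj_r: fixes v :: 'l assumes "v \<noteq> 0" shows "inj (\<lambda>x. x * v)"
proof (rule injI)
  fix x y assume "x * v = y * v"
  then have "(x * v) * inverse v = (y * v) * inverse v" by simp
  then show "x = y" using assms by (simp add: mult.assoc)
qed

lemma fd_sum:
  assumes "fd S" "fd T"
  shows "fd {x + y |x y. x \<in> S \<and> y \<in> T}"
proof -
  obtain F1 where F1: "finite F1" "S \<subseteq> V.span F1" using assms(1) unfolding fd_def by blast
  obtain F2 where F2: "finite F2" "T \<subseteq> V.span F2" using assms(2) unfolding fd_def by blast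
  have "{x + y |x y. x \<in> S \<and> y \<in> T} \<subseteq> V.span (F1 \<union> F2)"
  proof
    fix z assume "z \<in> {x + y |x y. x \<in> S \<and> y \<in> T}"
    then obtain x y where "z = x + y" "x \<in> S" "y \<in> T" by blast
    then show "z \<in> V.span (F1 \<union> F2)"
      using F1 F2 V.span_add V.span_mono[of F1 "F1 \<union> F2"] V.span_mono[of F2 "F1 \<union> F2"] by blast
  qed
  then show ?thesis unfolding fd_def using F1(1) F2(1) by blast
qed

lemma kfindim_I:
  assumes "V.subspace X" "fd X"
  shows "kfindim emb X"
proof -
  obtain B where B: "finite B" "B \<subseteq> X" "V.independent B" "X \<subseteq> V.span B" "card B = V.dim X"
    using fd_basis[OF assms(2)] by blast
  have "V.span B = X" using V.span_subspace[OF B(2) B(4) assms(1)] .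
  then show ?thesis unfolding kfindim_def using assms(1) B(1) by blast
qed

lemma kfindim_D:
  assumes "kfindim emb X"
  shows "V.subspace X" "fd X"
  using assms unfolding kfindim_def fd_def by (auto)


lemma mult_span:
  assumes "x \<in> V.span X" "y \<in> V.span Y"
  shows "x * y \<in> V.span (setmult X Y)"
proof -
  have 1: "t * y \<in> V.span (setmult X Y)" if "t \<in> X" for t
  proof -
    have "t * y \<in> (\<lambda>u. t * u) ` V.span Y" using assms(2) by blast
    also have "\<dots> = V.span ((\<lambda>u. t * u) ` Y)" using module_hom.span_image[OF hom_l] by metis
    also have "\<dots> \<subseteq> V.span (setmult X Y)"
      by (rule V.span_mono) (use that in \<open>auto simp: setmult_def\<close>)
    finally show ?thesis .
  qed
  have "x * y \<in> (\<lambda>t. t * y) ` V.span X" using assms(1) by blast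
  also have "\<dots> = V.span ((\<lambda>t. t * y) ` X)" using module_hom.span_image[OF hom_r] by metis
  also have "\<dots> \<subseteq> V.span (setmult X Y)"
    by (rule V.span_minimal) (use 1 in auto)
  finally show ?thesis .
qed

definition Rst :: "'l set \<Rightarrow> 'l set" where "Rst S = {x. \<forall>s\<in>S. s * x \<in> S}"
definition Lst :: "'l set \<Rightarrow> 'l set" where "Lst S = {x. \<forall>s\<in>S. x * s \<in> S}"

lemma Rst_ok:
  assumes S: "V.subspace S" "fd S" "s0 \<in> S" "s0 \<noteq> 0"
  shows "sub_division_ring_over emb (Rst S) \<and> kfindim emb (Rst S)"
proof -
  have sc: "s * emb c \<in> S" if "s \<in> S" for s c
    using V.subspace_scale[OF S(1) that, of c] by (simp add: kscale_def emb_comm)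
  have inv: "inverse x \<in> Rst S" if x: "x \<in> Rst S" "x \<noteq> 0" for x
  proof -
    let ?f = "\<lambda>y. y * x"
    have sub: "?f ` S \<subseteq> S" using x unfolding Rst_def by auto
    have "?f ` S = S"
    proof (rule subspace_dim_equal'[OF subspace_image[OF hom_r S(1)] S(1) sub S(2)])
      show "V.dim S \<le> V.dim (?f ` S)" using dim_image_inj[OF hom_r inj_r[OF x(2)]] by simp
    qed
    then have "s * inverse x \<in> S" if "s \<in> S" for s
    proof -
      from that \<open>?f ` S = S\<close> obtain s' where "s' \<in> S" "s = s' * x" by blast
      then show ?thesis using x(2) by (simp add: mult.assoc)
    qed
    then show ?thesis unfolding Rst_def by blast
  qed
  have sub: "V.subspace (Rst S)"
  proof (rule V.subspaceI)
    show "0 \<in> Rst S" unfolding Rst_def using V.subspace_0[OF S(1)] by simp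
  next
    fix x y assume "x \<in> Rst S" "y \<in> Rst S"
    then show "x + y \<in> Rst S" unfolding Rst_def using V.subspace_add[OF S(1)] by (simp add: distrib_left)
  next
    fix c x assume "x \<in> Rst S"
    then have a: "\<forall>s\<in>S. s * x \<in> S" unfolding Rst_def by simp
    show "kscale emb c x \<in> Rst S" unfolding Rst_def
    proof (intro CollectI ballI)
      fix s assume "s \<in> S"
      have "s * kscale emb c x = kscale emb c (s * x)"
        by (simp add: kscale_def mult.assoc[symmetric]) (metis emb_comm)
      then show "s * kscale emb c x \<in> S" using V.subspace_scale[OF S(1)] a \<open>s \<in> S\<close> by simp
    qed
  qed
  have "Rst S \<subseteq> (\<lambda>y. inverse s0 * y) ` S"
  proof
    fix x assume "x \<in> Rst S"
    then have "s0 * x \<in> S" using S(3) unfolding Rst_def by blast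
    moreover have "x = inverse s0 * (s0 * x)" using S(4) by (simp add: mult.assoc[symmetric])
    ultimately show "x \<in> (\<lambda>y. inverse s0 * y) ` S" by blast
  qed
  then have fdR: "fd (Rst S)" using fd_subset[OF fd_image[OF hom_l S(2)]] by blast
  have "sub_division_ring_over emb (Rst S)"
    unfolding sub_division_ring_over_def
  proof (intro conjI ballI impI)
    show "range emb \<subseteq> Rst S" using sc unfolding Rst_def by auto
    show "0 \<in> Rst S" using V.subspace_0[OF sub] .
    show "1 \<in> Rst S" unfolding Rst_def by simp
    fix x assume x: "x \<in> Rst S"
    show "- x \<in> Rst S" using V.subspace_neg[OF sub x] .
    { fix y assume y: "y \<in> Rst S"
      show "x + y \<in> Rst S" using V.subspace_add[OF sub x y] .
      show "x * y \<in> Rst S" using x y unfolding Rst_def by (simp add: mult.assoc[symmetric]) }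
    { assume "x \<noteq> 0" then show "inverse x \<in> Rst S" using inv x by blast }
  qed
  then show ?thesis using kfindim_I[OF sub fdR] by blast
qed

lemma Lst_ok:
  assumes S: "V.subspace S" "fd S" "s0 \<in> S" "s0 \<noteq> 0"
  shows "sub_division_ring_over emb (Lst S) \<and> kfindim emb (Lst S)"
proof -
  have sc: "emb c * s \<in> S" if "s \<in> S" for s c
    using V.subspace_scale[OF S(1) that, of c] by (simp add: kscale_def)
  have inv: "inverse x \<in> Lst S" if x: "x \<in> Lst S" "x \<noteq> 0" for x
  proof -
    let ?f = "\<lambda>y. x * y"
    have sub: "?f ` S \<subseteq> S" using x unfolding Lst_def by auto
    have "?f ` S = S"
    proof (rule subspace_dim_equal'[OF subspace_image[OF hom_l S(1)] S(1) sub S(2)])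
      show "V.dim S \<le> V.dim (?f ` S)" using dim_image_inj[OF hom_l inj_l[OF x(2)]] by simp
    qed
    then have "inverse x * s \<in> S" if "s \<in> S" for s
    proof -
      from that \<open>?f ` S = S\<close> obtain s' where "s' \<in> S" "s = x * s'" by blast
      then show ?thesis using x(2) by (simp add: mult.assoc[symmetric])
    qed
    then show ?thesis unfolding Lst_def by blast
  qed
  have sub: "V.subspace (Lst S)"
  proof (rule V.subspaceI)
    show "0 \<in> Lst S" unfolding Lst_def using V.subspace_0[OF S(1)] by simp
  next
    fix x y assume "x \<in> Lst S" "y \<in> Lst S"
    then show "x + y \<in> Lst S" unfolding Lst_def using V.subspace_add[OF S(1)] by (simp add: distrib_right)
  next
    fix c x assume "x \<in> Lst S"
    then have a: "\<forall>s\<in>S. x * s \<in> S" unfolding Lst_def by simp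
    show "kscale emb c x \<in> Lst S" unfolding Lst_def
    proof (intro CollectI ballI)
      fix s assume "s \<in> S"
      have "kscale emb c x * s = kscale emb c (x * s)"
        by (simp add: kscale_def mult.assoc)
      then show "kscale emb c x * s \<in> S" using V.subspace_scale[OF S(1)] a \<open>s \<in> S\<close> by simp
    qed
  qed
  have "Lst S \<subseteq> (\<lambda>y. y * inverse s0) ` S"
  proof
    fix x assume "x \<in> Lst S"
    then have "x * s0 \<in> S" using S(3) unfolding Lst_def by blast
    moreover have "x = (x * s0) * inverse s0" using S(4) by (simp add: mult.assoc)
    ultimately show "x \<in> (\<lambda>y. y * inverse s0) ` S" by blast
  qed
  then have fdR: "fd (Lst S)" using fd_subset[OF fd_image[OF hom_r S(2)]] by blast
  have "sub_division_ring_over emb (Lst S)"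
    unfolding sub_division_ring_over_def
  proof (intro conjI ballI impI)
    show "range emb \<subseteq> Lst S" using sc unfolding Lst_def by auto
    show "0 \<in> Lst S" using V.subspace_0[OF sub] .
    show "1 \<in> Lst S" unfolding Lst_def by simp
    fix x assume x: "x \<in> Lst S"
    show "- x \<in> Lst S" using V.subspace_neg[OF sub x] .
    { fix y assume y: "y \<in> Lst S"
      show "x + y \<in> Lst S" using V.subspace_add[OF sub x y] .
      show "x * y \<in> Lst S" using x y unfolding Lst_def by (simp add: mult.assoc) }
    { assume "x \<noteq> 0" then show "inverse x \<in> Lst S" using inv x by blast }
  qed
  then show ?thesis using kfindim_I[OF sub fdR] by blast
qed


definition Good :: "'l set \<Rightarrow> 'l set \<Rightarrow> 'l set \<Rightarrow> bool" where
  "Good C A B \<longleftrightarrow> (\<exists>S H. V.subspace S \<and> S \<subseteq> C \<and> kfindim emb S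
     \<and> sub_division_ring_over emb H \<and> kfindim emb H
     \<and> V.dim A + V.dim B \<le> V.dim S + V.dim H
     \<and> (setmult H S = S \<or> setmult S H = S))"

lemma Good_mono: "Good C A' B' \<Longrightarrow> V.dim A + V.dim B \<le> V.dim A' + V.dim B' \<Longrightarrow> Good C A B"
  unfolding Good_def by (meson order_trans)

lemma term_i:
  assumes C: "V.subspace C" and A: "kfindim emb A" and B: "kfindim emb B"
    and a: "a \<in> A" "a \<noteq> 0" and b: "b \<in> B" "b \<noteq> 0" and AB: "setmult A B \<subseteq> C"
    and cond: "\<forall>x\<in>A. \<forall>b1\<in>B. \<forall>b2\<in>B. b1 \<noteq> 0 \<longrightarrow> x * b2 * inverse b1 \<in> A"
  shows "Good C A B"
proof -
  let ?S = "(\<lambda>x. x * b) ` A"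
  have subS: "V.subspace ?S" using subspace_image[OF hom_r kfindim_D(1)[OF A]] .
  have fdS: "fd ?S" using fd_image[OF hom_r kfindim_D(2)[OF A]] .
  have SC: "?S \<subseteq> C" using AB b unfolding setmult_def by blast
  have s0: "a * b \<in> ?S" "a * b \<noteq> 0" using a b by auto
  have H: "sub_division_ring_over emb (Rst ?S)" "kfindim emb (Rst ?S)"
    using Rst_ok[OF subS fdS s0] by blast+
  have dS: "V.dim ?S = V.dim A" using dim_image_inj[OF hom_r inj_r[OF b(2)]] .
  have incl: "(\<lambda>y. inverse b * y) ` B \<subseteq> Rst ?S"
  proof (clarsimp simp: Rst_def)
    fix y x assume y: "y \<in> B" and x: "x \<in> A"
    have "x * b * (inverse b * y) = x * (b * inverse b) * y" by (simp only: mult.assoc)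
    also have "\<dots> = x * y" using b(2) by simp
    also have "\<dots> = x * y * (inverse b * b)" using b(2) by simp
    also have "\<dots> = (x * y * inverse b) * b" by (simp only: mult.assoc)
    finally have "x * b * (inverse b * y) = (x * y * inverse b) * b" .
    moreover have "x * y * inverse b \<in> A" using cond x y b by blast
    ultimately show "x * b * (inverse b * y) \<in> ?S" by (metis image_eqI)
  qed
  have "V.dim B = V.dim ((\<lambda>y. inverse b * y) ` B)"
    using dim_image_inj[OF hom_l inj_l] b(2) by simp
  also have "\<dots> \<le> V.dim (Rst ?S)" using dim_subset'[OF kfindim_D(2)[OF H(2)] incl] .
  finally have dH: "V.dim B \<le> V.dim (Rst ?S)" .
  have "setmult ?S (Rst ?S) = ?S"
  proof
    show "setmult ?S (Rst ?S) \<subseteq> ?S" unfolding setmult_def Rst_def by blast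
    show "?S \<subseteq> setmult ?S (Rst ?S)"
    proof
      fix s assume "s \<in> ?S"
      moreover have "1 \<in> Rst ?S" unfolding Rst_def by auto
      moreover have "s = s * 1" by simp
      ultimately show "s \<in> setmult ?S (Rst ?S)" unfolding setmult_def by blast
    qed
  qed
  then show ?thesis unfolding Good_def
    using subS SC kfindim_I[OF subS fdS] H dS dH by (intro exI[of _ ?S] exI[of _ "Rst ?S"]) auto
qed

lemma term_ii:
  assumes C: "V.subspace C" "fd C" and A: "kfindim emb A" and B: "kfindim emb B"
    and a: "a \<in> A" "a \<noteq> 0" and b: "b \<in> B" "b \<noteq> 0" and AB: "setmult A B \<subseteq> C"
    and cond: "\<forall>x\<in>A. \<forall>a1\<in>A. \<forall>a2\<in>A. a1 \<noteq> 0 \<longrightarrow> x * inverse a1 * a2 \<in> A"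
  shows "Good C A B"
proof -
  let ?S = "V.span (setmult A B)"
  have subS: "V.subspace ?S" by simp
  have SC: "?S \<subseteq> C" using V.span_minimal[OF AB C(1)] .
  have fdS: "fd ?S" using fd_subset[OF C(2) SC] .
  have "a * b \<in> setmult A B" using a b unfolding setmult_def by blast
  then have s0: "a * b \<in> ?S" "a * b \<noteq> 0" using a b V.span_superset by auto
  have H: "sub_division_ring_over emb (Lst ?S)" "kfindim emb (Lst ?S)"
    using Lst_ok[OF subS fdS s0] by blast+
  have "(\<lambda>y. a * y) ` B \<subseteq> setmult A B" using a(1) unfolding setmult_def by blast
  then have "(\<lambda>y. a * y) ` B \<subseteq> ?S" using V.span_superset by blast
  then have dS: "V.dim B \<le> V.dim ?S"
    using dim_subset'[OF fdS] dim_image_inj[OF hom_l inj_l[OF a(2)]] by metis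
  have incl: "(\<lambda>x. x * inverse a) ` A \<subseteq> Lst ?S"
  proof (clarsimp simp: Lst_def)
    fix x s assume x: "x \<in> A" and s: "s \<in> ?S"
    let ?T = "{t. x * inverse a * t \<in> ?S}"
    have "V.subspace ?T" using module_hom.subspace_linear_preimage[OF hom_l subS] .
    moreover have "setmult A B \<subseteq> ?T"
    proof
      fix z assume "z \<in> setmult A B"
      then obtain y b' where y: "y \<in> A" and b': "b' \<in> B" and z: "z = y * b'"
        unfolding setmult_def by blast
      have "x * inverse a * (y * b') = (x * inverse a * y) * b'" by (simp add: mult.assoc)
      moreover have "x * inverse a * y \<in> A" using cond x y a by blast
      ultimately have "x * inverse a * z \<in> setmult A B"
        using b' z unfolding setmult_def by blast
      then show "z \<in> ?T" using V.span_superset by blast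
    qed
    ultimately have "?S \<subseteq> ?T" using V.span_minimal by blast
    then show "x * inverse a * s \<in> ?S" using s by blast
  qed
  have "V.dim A = V.dim ((\<lambda>x. x * inverse a) ` A)"
    using dim_image_inj[OF hom_r inj_r] a(2) by simp
  also have "\<dots> \<le> V.dim (Lst ?S)" using dim_subset'[OF kfindim_D(2)[OF H(2)] incl] .
  finally have dH: "V.dim A \<le> V.dim (Lst ?S)" .
  have "setmult (Lst ?S) ?S = ?S"
  proof
    show "setmult (Lst ?S) ?S \<subseteq> ?S" unfolding setmult_def Lst_def by blast
    show "?S \<subseteq> setmult (Lst ?S) ?S"
    proof
      fix s assume "s \<in> ?S"
      moreover have "1 \<in> Lst ?S" unfolding Lst_def by simp
      moreover have "s = 1 * s" by simp
      ultimately show "s \<in> setmult (Lst ?S) ?S" unfolding setmult_def by blast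
    qed
  qed
  then show ?thesis unfolding Good_def
    using subS SC kfindim_I[OF subS fdS] H dS dH by (intro exI[of _ ?S] exI[of _ "Lst ?S"]) auto
qed


definition sumsp :: "'l set \<Rightarrow> 'l set \<Rightarrow> 'l set" where
  "sumsp S T = {x + y |x y. x \<in> S \<and> y \<in> T}"

definition A1 :: "'l set \<Rightarrow> 'l \<Rightarrow> 'l set" where "A1 A g = sumsp A ((\<lambda>a. a * g) ` A)"
definition A2 :: "'l set \<Rightarrow> 'l \<Rightarrow> 'l set" where "A2 A g = {x \<in> A. x * g \<in> A}"
definition B1 :: "'l set \<Rightarrow> 'l \<Rightarrow> 'l set" where "B1 B g = {y \<in> B. g * y \<in> B}"
definition B2 :: "'l set \<Rightarrow> 'l \<Rightarrow> 'l set" where "B2 B g = sumsp B ((\<lambda>b. g * b) ` B)"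

lemma A2_eq:
  assumes g: "g \<noteq> 0"
  shows "A2 A g = (\<lambda>y. y * inverse g) ` (A \<inter> (\<lambda>a. a * g) ` A)"
proof
  show "A2 A g \<subseteq> (\<lambda>y. y * inverse g) ` (A \<inter> (\<lambda>a. a * g) ` A)"
  proof
    fix x assume "x \<in> A2 A g"
    then have x: "x \<in> A" "x * g \<in> A" unfolding A2_def by auto
    have "x = (x * g) * inverse g" using g by (simp add: mult.assoc)
    moreover have "x * g \<in> A \<inter> (\<lambda>a. a * g) ` A" using x by blast
    ultimately show "x \<in> (\<lambda>y. y * inverse g) ` (A \<inter> (\<lambda>a. a * g) ` A)" by (rule image_eqI)
  qed
  show "(\<lambda>y. y * inverse g) ` (A \<inter> (\<lambda>a. a * g) ` A) \<subseteq> A2 A g"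
  proof
    fix z assume "z \<in> (\<lambda>y. y * inverse g) ` (A \<inter> (\<lambda>a. a * g) ` A)"
    then obtain a where a: "a \<in> A" "a * g \<in> A" "z = a * g * inverse g" by blast
    then have "z = a" using g by (simp add: mult.assoc)
    then show "z \<in> A2 A g" using a unfolding A2_def by simp
  qed
qed

lemma B1_eq:
  assumes g: "g \<noteq> 0"
  shows "B1 B g = (\<lambda>y. inverse g * y) ` (B \<inter> (\<lambda>b. g * b) ` B)"
proof
  show "B1 B g \<subseteq> (\<lambda>y. inverse g * y) ` (B \<inter> (\<lambda>b. g * b) ` B)"
  proof
    fix x assume "x \<in> B1 B g"
    then have x: "x \<in> B" "g * x \<in> B" unfolding B1_def by auto
    have "x = inverse g * (g * x)" using g by (simp add: mult.assoc[symmetric])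
    moreover have "g * x \<in> B \<inter> (\<lambda>b. g * b) ` B" using x by blast
    ultimately show "x \<in> (\<lambda>y. inverse g * y) ` (B \<inter> (\<lambda>b. g * b) ` B)" by (rule image_eqI)
  qed
  show "(\<lambda>y. inverse g * y) ` (B \<inter> (\<lambda>b. g * b) ` B) \<subseteq> B1 B g"
  proof
    fix z assume "z \<in> (\<lambda>y. inverse g * y) ` (B \<inter> (\<lambda>b. g * b) ` B)"
    then obtain b where b: "b \<in> B" "g * b \<in> B" "z = inverse g * (g * b)" by blast
    then have "z = b" using g by (simp add: mult.assoc[symmetric])
    then show "z \<in> B1 B g" using b unfolding B1_def by simp
  qed
qed

lemma A1_kf: assumes "kfindim emb A" shows "kfindim emb (A1 A g)"
  unfolding A1_def sumsp_def
  using kfindim_I[OF V.subspace_sums[OF kfindim_D(1)[OF assms] subspace_image[OF hom_r kfindim_D(1)[OF assms]]]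
      fd_sum[OF kfindim_D(2)[OF assms] fd_image[OF hom_r kfindim_D(2)[OF assms]]]] .

lemma B2_kf: assumes "kfindim emb B" shows "kfindim emb (B2 B g)"
  unfolding B2_def sumsp_def
  using kfindim_I[OF V.subspace_sums[OF kfindim_D(1)[OF assms] subspace_image[OF hom_l kfindim_D(1)[OF assms]]]
      fd_sum[OF kfindim_D(2)[OF assms] fd_image[OF hom_l kfindim_D(2)[OF assms]]]] .

lemma A2_kf: assumes "kfindim emb A" shows "kfindim emb (A2 A g)"
proof -
  have "A2 A g = A \<inter> {x. x * g \<in> A}" unfolding A2_def by auto
  moreover have "V.subspace (A \<inter> {x. x * g \<in> A})"
    using V.subspace_inter[OF kfindim_D(1)[OF assms] module_hom.subspace_linear_preimage[OF hom_r kfindim_D(1)[OF assms]]] .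
  ultimately show ?thesis using kfindim_I fd_subset[OF kfindim_D(2)[OF assms]] by (metis Int_lower1)
qed

lemma B1_kf: assumes "kfindim emb B" shows "kfindim emb (B1 B g)"
proof -
  have "B1 B g = B \<inter> {x. g * x \<in> B}" unfolding B1_def by auto
  moreover have "V.subspace (B \<inter> {x. g * x \<in> B})"
    using V.subspace_inter[OF kfindim_D(1)[OF assms] module_hom.subspace_linear_preimage[OF hom_l kfindim_D(1)[OF assms]]] .
  ultimately show ?thesis using kfindim_I fd_subset[OF kfindim_D(2)[OF assms]] by (metis Int_lower1)
qed

lemma dimA: assumes "kfindim emb A" "g \<noteq> 0"
  shows "V.dim (A1 A g) + V.dim (A2 A g) = 2 * V.dim A"
proof -
  have S: "V.subspace A" "fd A" using kfindim_D[OF assms(1)] by auto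
  have "V.dim (A1 A g) + V.dim (A \<inter> (\<lambda>a. a * g) ` A) = V.dim A + V.dim ((\<lambda>a. a * g) ` A)"
    unfolding A1_def sumsp_def
    by (rule dim_sums_Int'[OF S(1) subspace_image[OF hom_r S(1)] S(2) fd_image[OF hom_r S(2)]])
  moreover have "V.dim ((\<lambda>a. a * g) ` A) = V.dim A" using dim_image_inj[OF hom_r inj_r[OF assms(2)]] .
  moreover have "V.dim (A2 A g) = V.dim (A \<inter> (\<lambda>a. a * g) ` A)"
    unfolding A2_eq[OF assms(2)] using dim_image_inj[OF hom_r inj_r] assms(2) by simp
  ultimately show ?thesis by simp
qed

lemma dimB: assumes "kfindim emb B" "g \<noteq> 0"
  shows "V.dim (B1 B g) + V.dim (B2 B g) = 2 * V.dim B"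
proof -
  have S: "V.subspace B" "fd B" using kfindim_D[OF assms(1)] by auto
  have "V.dim (B2 B g) + V.dim (B \<inter> (\<lambda>b. g * b) ` B) = V.dim B + V.dim ((\<lambda>b. g * b) ` B)"
    unfolding B2_def sumsp_def
    by (rule dim_sums_Int'[OF S(1) subspace_image[OF hom_l S(1)] S(2) fd_image[OF hom_l S(2)]])
  moreover have "V.dim ((\<lambda>b. g * b) ` B) = V.dim B" using dim_image_inj[OF hom_l inj_l[OF assms(2)]] .
  moreover have "V.dim (B1 B g) = V.dim (B \<inter> (\<lambda>b. g * b) ` B)"
    unfolding B1_eq[OF assms(2)] using dim_image_inj[OF hom_l inj_l] assms(2) by simp
  ultimately show ?thesis by simp
qed

lemma prod1: assumes "V.subspace C" "setmult A B \<subseteq> C"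
  shows "setmult (A1 A g) (B1 B g) \<subseteq> C"
proof (clarsimp simp: setmult_def A1_def B1_def sumsp_def)
  fix x a y assume x: "x \<in> A" and a: "a \<in> A" and y: "y \<in> B" "g * y \<in> B"
  have "(x + a * g) * y = x * y + a * (g * y)" by (simp add: distrib_right mult.assoc)
  moreover have "x * y \<in> C" "a * (g * y) \<in> C" using assms(2) x a y unfolding setmult_def by blast+
  ultimately show "(x + a * g) * y \<in> C" using V.subspace_add[OF assms(1)] by simp
qed

lemma prod2: assumes "V.subspace C" "setmult A B \<subseteq> C"
  shows "setmult (A2 A g) (B2 B g) \<subseteq> C"
proof (clarsimp simp: setmult_def A2_def B2_def sumsp_def)
  fix x y b assume x: "x \<in> A" "x * g \<in> A" and y: "y \<in> B" and b: "b \<in> B"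
  have "x * (y + g * b) = x * y + (x * g) * b" by (simp add: distrib_left mult.assoc)
  moreover have "x * y \<in> C" "(x * g) * b \<in> C" using assms(2) x b y unfolding setmult_def by blast+
  ultimately show "x * (y + g * b) \<in> C" using V.subspace_add[OF assms(1)] by simp
qed

lemma dim_bound:
  assumes "fd C" "kfindim emb A" "kfindim emb B" "a \<in> A" "a \<noteq> 0" "b \<in> B" "b \<noteq> 0" "setmult A B \<subseteq> C"
  shows "V.dim A \<le> V.dim C" "V.dim B \<le> V.dim C"
proof -
  have "(\<lambda>x. x * b) ` A \<subseteq> C" using assms(6,8) unfolding setmult_def by blast
  then show "V.dim A \<le> V.dim C"
    using dim_subset'[OF assms(1)] dim_image_inj[OF hom_r inj_r[OF assms(7)]] by metis
  have "(\<lambda>x. a * x) ` B \<subseteq> C" using assms(4,8) unfolding setmult_def by blast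
  then show "V.dim B \<le> V.dim C"
    using dim_subset'[OF assms(1)] dim_image_inj[OF hom_l inj_l[OF assms(5)]] by metis
qed


lemma A1_gt:
  assumes A: "kfindim emb A" and x: "x \<in> A" "x * g \<notin> A"
  shows "V.dim A < V.dim (A1 A g)"
proof (rule ccontr)
  assume "\<not> V.dim A < V.dim (A1 A g)"
  then have le: "V.dim (A1 A g) \<le> V.dim A" by simp
  have sub: "A \<subseteq> A1 A g"
  proof
    fix y assume "y \<in> A"
    moreover have "0 = 0 * g" by simp
    moreover have "0 \<in> A" using V.subspace_0[OF kfindim_D(1)[OF A]] .
    ultimately show "y \<in> A1 A g" unfolding A1_def sumsp_def by force
  qed
  have "A = A1 A g"
    using subspace_dim_equal'[OF kfindim_D(1)[OF A] kfindim_D(1)[OF A1_kf[OF A]] sub kfindim_D(2)[OF A1_kf[OF A]] le] .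
  moreover have "x * g \<in> A1 A g"
    using x(1) V.subspace_0[OF kfindim_D(1)[OF A]] unfolding A1_def sumsp_def by force
  ultimately show False using x(2) by simp
qed

lemma nonzero_of_dim:
  assumes "kfindim emb X" "V.dim X \<noteq> 0"
  obtains x where "x \<in> X" "x \<noteq> 0"
  using dim_zero_iff[OF kfindim_D(2)[OF assms(1)]] assms(2) by blast

lemma main_ind:
  assumes C: "V.subspace C" "fd C"
  shows "\<forall>A B a b. kfindim emb A \<and> kfindim emb B \<and> a \<in> A \<and> a \<noteq> 0 \<and> b \<in> B \<and> b \<noteq> 0
     \<and> setmult A B \<subseteq> C \<longrightarrow> Good C A B"
proof -
  define f1 where "f1 = (\<lambda>p :: 'l set \<times> 'l set. 2 * V.dim C - (V.dim (fst p) + V.dim (snd p)))"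
  define f2 where "f2 = (\<lambda>p :: 'l set \<times> 'l set. V.dim (snd p))"
  define R where "R = (\<lambda>p :: 'l set \<times> 'l set. \<forall>a b. kfindim emb (fst p) \<and> kfindim emb (snd p)
     \<and> a \<in> fst p \<and> a \<noteq> 0 \<and> b \<in> snd p \<and> b \<noteq> 0 \<and> setmult (fst p) (snd p) \<subseteq> C \<longrightarrow> Good C (fst p) (snd p))"
  have "R p" for p
  proof (induction p rule: wf_induct[OF wf_measures[of "[f1, f2]"]])
    case (1 p)
    obtain A B where p: "p = (A, B)" by (cases p)
    show ?case unfolding R_def p fst_conv snd_conv
    proof (intro allI impI, elim conjE)
      fix a b assume A: "kfindim emb A" and B: "kfindim emb B" and a: "a \<in> A" "a \<noteq> 0"
        and b: "b \<in> B" "b \<noteq> 0" and AB: "setmult A B \<subseteq> C"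
      have bdA: "V.dim A \<le> V.dim C" "V.dim B \<le> V.dim C"
        using dim_bound[OF C(2) A B a b AB] by auto
      have prog: "Good C A B" if A': "kfindim emb A'" and B': "kfindim emb B'"
        and a': "a' \<in> A'" "a' \<noteq> 0" and b': "b' \<in> B'" "b' \<noteq> 0" and AB': "setmult A' B' \<subseteq> C"
        and lt: "V.dim A + V.dim B < V.dim A' + V.dim B' \<or>
            (V.dim A' + V.dim B' = V.dim A + V.dim B \<and> V.dim B' < V.dim B)" for A' B' a' b'
      proof -
        have bd': "V.dim A' \<le> V.dim C" "V.dim B' \<le> V.dim C"
          using dim_bound[OF C(2) A' B' a' b' AB'] by auto
        have "((A', B'), p) \<in> measures [f1, f2]"
          using lt bd' bdA unfolding p f1_def f2_def by (auto simp: in_measures)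
        then have "R (A', B')" using 1 by blast
        then have "Good C A' B'" unfolding R_def using A' B' a' b' AB' by auto
        then show ?thesis by (rule Good_mono) (use lt in auto)
      qed
      show "Good C A B"
      proof (cases "\<forall>x\<in>A. \<forall>b1\<in>B. \<forall>b2\<in>B. b1 \<noteq> 0 \<longrightarrow> x * b2 * inverse b1 \<in> A")
        case True
        then show ?thesis using term_i[OF C(1) A B a b AB] by blast
      next
        case notI: False
        show ?thesis
        proof (cases "\<forall>x\<in>A. \<forall>a1\<in>A. \<forall>a2\<in>A. a1 \<noteq> 0 \<longrightarrow> x * inverse a1 * a2 \<in> A")
          case True
          then show ?thesis using term_ii[OF C A B a b AB] by blast
        next
          case notII: False
          obtain x1 b1 b2 where X1: "x1 \<in> A" "b1 \<in> B" "b2 \<in> B" "b1 \<noteq> 0" "x1 * b2 * inverse b1 \<notin> A"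
            using notI by blast
          define g1 where "g1 = b2 * inverse b1"
          have x1g1: "x1 * g1 \<notin> A" using X1(5) unfolding g1_def by (simp add: mult.assoc)
          have g1: "g1 \<noteq> 0" using x1g1 V.subspace_0[OF kfindim_D(1)[OF A]] by auto
          obtain x2 a1 a2 where X2: "x2 \<in> A" "a1 \<in> A" "a2 \<in> A" "a1 \<noteq> 0" "x2 * inverse a1 * a2 \<notin> A"
            using notII by blast
          define g2 where "g2 = inverse a1 * a2"
          have x2g2: "x2 * g2 \<notin> A" using X2(5) unfolding g2_def by (simp add: mult.assoc)
          have g2: "g2 \<noteq> 0" using x2g2 V.subspace_0[OF kfindim_D(1)[OF A]] by auto
          have "g1 * b1 = b2 * (inverse b1 * b1)" unfolding g1_def by (rule mult.assoc)
          also have "\<dots> = b2" using X1(4) by simp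
          finally have gb: "g1 * b1 = b2" .
          have b1B1: "b1 \<in> B1 B g1" using X1(2,3) gb unfolding B1_def by blast
          have "a1 * g2 = (a1 * inverse a1) * a2" unfolding g2_def by (rule mult.assoc[symmetric])
          also have "\<dots> = a2" using X2(4) by simp
          finally have ag: "a1 * g2 = a2" .
          have a1A2: "a1 \<in> A2 A g2" using X2(2,3) ag unfolding A2_def by blast
          have aA1: "a \<in> A1 A g" for g
          proof -
            have z: "0 \<in> A" using V.subspace_0[OF kfindim_D(1)[OF A]] .
            have "a = a + 0 * g" by simp
            moreover have "0 * g \<in> (\<lambda>a. a * g) ` A" using z by (rule imageI)
            ultimately show ?thesis unfolding A1_def sumsp_def using a(1) by blast
          qed
          have bB2: "b \<in> B2 B g" for g
          proof -
            have z: "0 \<in> B" using V.subspace_0[OF kfindim_D(1)[OF B]] .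
            have "b = b + g * 0" by simp
            moreover have "g * 0 \<in> (\<lambda>b. g * b) ` B" using z by (rule imageI)
            ultimately show ?thesis unfolding B2_def sumsp_def using b(1) by blast
          qed
          have p1: "V.dim A < V.dim (A1 A g1)" using A1_gt[OF A X1(1) x1g1] .
          have p2: "V.dim A < V.dim (A1 A g2)" using A1_gt[OF A X2(1) x2g2] .
          have e1: "V.dim (A1 A g1) + V.dim (A2 A g1) = 2 * V.dim A" using dimA[OF A g1] .
          have e2: "V.dim (A1 A g2) + V.dim (A2 A g2) = 2 * V.dim A" using dimA[OF A g2] .
          have f1': "V.dim (B1 B g1) + V.dim (B2 B g1) = 2 * V.dim B" using dimB[OF B g1] .
          have f2': "V.dim (B1 B g2) + V.dim (B2 B g2) = 2 * V.dim B" using dimB[OF B g2] .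
          note kfs = A1_kf[OF A] A2_kf[OF A] B1_kf[OF B] B2_kf[OF B]
          note prs = prod1[OF C(1) AB] prod2[OF C(1) AB]
          show ?thesis
          proof (cases "V.dim A + V.dim B \<le> V.dim (A1 A g1) + V.dim (B1 B g1)")
            case True
            show ?thesis
              by (rule prog[OF kfs(1) kfs(3) aA1 a(2) b1B1 X1(4) prs(1)]) (use True p1 in auto)
          next
            case F1: False
            show ?thesis
            proof (cases "V.dim (A2 A g1) = 0")
              case False
              obtain y where y: "y \<in> A2 A g1" "y \<noteq> 0" using nonzero_of_dim[OF kfs(2) False] by blast
              show ?thesis
                by (rule prog[OF kfs(2) kfs(4) y bB2 b(2) prs(2)]) (use F1 e1 f1' in auto)
            next
              case q0: True
              have ab: "V.dim A < V.dim B" using F1 q0 e1 by auto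
              show ?thesis
              proof (cases "V.dim A + V.dim B < V.dim (A2 A g2) + V.dim (B2 B g2)")
                case True
                show ?thesis
                  by (rule prog[OF kfs(2) kfs(4) a1A2 X2(4) bB2 b(2) prs(2)]) (use True in auto)
              next
                case F2: False
                show ?thesis
                proof (cases "V.dim (B1 B g2) = 0")
                  case False
                  obtain y where y: "y \<in> B1 B g2" "y \<noteq> 0" using nonzero_of_dim[OF kfs(3) False] by blast
                  show ?thesis
                    by (rule prog[OF kfs(1) kfs(3) aA1 a(2) y prs(1)]) (use F2 e2 f2' p2 in auto)
                next
                  case True
                  then show ?thesis using F2 e2 f2' ab by auto
                qed
              qed
            qed
          qed
        qed
      qed
    qed
  qed
  note Rall = this
  show ?thesis
  proof (intro allI impI)
    fix A B a b
    assume H: "kfindim emb A \<and> kfindim emb B \<and> a \<in> A \<and> a \<noteq> 0 \<and> b \<in> B \<and> b \<noteq> 0 \<and> setmult A B \<subseteq> C"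
    have "R (A, B)" by (rule Rall)
    then show "Good C A B" using H unfolding R_def by auto
  qed
qed


lemma main_result:
  assumes A: "kfindim emb A" and "A \<noteq> {0}" and B: "kfindim emb B" and "B \<noteq> {0}"
  shows "Good (V.span (setmult A B)) A B"
proof -
  obtain a where a: "a \<in> A" "a \<noteq> 0"
    using assms(2) V.subspace_0[OF kfindim_D(1)[OF A]] by blast
  obtain b where b: "b \<in> B" "b \<noteq> 0"
    using assms(4) V.subspace_0[OF kfindim_D(1)[OF B]] by blast
  obtain FA where FA: "finite FA" "V.span FA = A" using A unfolding kfindim_def by blast
  obtain FB where FB: "finite FB" "V.span FB = B" using B unfolding kfindim_def by blast
  have "setmult A B \<subseteq> V.span (setmult FA FB)"
    using mult_span FA(2) FB(2) unfolding setmult_def[of A B] by blast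
  then have "V.span (setmult A B) \<subseteq> V.span (setmult FA FB)"
    using V.span_minimal by blast
  moreover have "finite (setmult FA FB)"
  proof -
    have "setmult FA FB = (\<lambda>(x, y). x * y) ` (FA \<times> FB)" unfolding setmult_def by auto
    then show ?thesis using FA(1) FB(1) by simp
  qed
  ultimately have fdC: "fd (V.span (setmult A B))" unfolding fd_def by blast
  have "setmult A B \<subseteq> V.span (setmult A B)" using V.span_superset .
  then show ?thesis using main_ind[OF V.subspace_span fdC] A B a b by blast
qed

end

theorem mainTheorem6:
  fixes emb :: "'k::field \<Rightarrow> 'l::division_ring"
    and A B :: "'l set"
  assumes "central_field_emb emb"
    and "kfindim emb A" and "A \<noteq> {0}"
    and "kfindim emb B" and "B \<noteq> {0}"
  shows "\<exists>S H. module.subspace (kscale emb) S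
     \<and> S \<subseteq> module.span (kscale emb) (setmult A B)
     \<and> kfindim emb S
     \<and> sub_division_ring_over emb H \<and> kfindim emb H
     \<and> int (vector_space.dim (kscale emb) S) \<ge>
          int (vector_space.dim (kscale emb) A) + int (vector_space.dim (kscale emb) B)
          - int (vector_space.dim (kscale emb) H)
     \<and> (setmult H S = S \<or> setmult S H = S)"
proof -
  interpret kd emb by (rule kd.intro) (fact assms(1))
  have "Good (V.span (setmult A B)) A B" using main_result assms(2-5) by blast
  then show ?thesis unfolding Good_def by fastforce
qed

end
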